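(* Let $F$ be a non-archimedean local field of characteristic zero with ring of integers $\mathfrak{o}$ and maximal ideal $\mathfrak{p}$. Let $a,b,c\in F$ with $d=b^2-4ac\neq0$ satisfy (A1) $a,b\in\mathfrak{o}$, $c\in\mathfrak{o}^\times$, and (A2) if $d\notin F^{\times2}$ then $d$ generates the discriminant ideal of $L/F$, and if $d\in F^{\times2}$ then $d\in\mathfrak{o}^\times$. Let $\xi_0=\frac{-b+\sqrt d}2$ and $\alpha=\frac{b+\sqrt d}{2c}$ if $L$ is a field, and $\xi_0=(\frac{-b+\sqrt d}2,\frac{-b-\sqrt d}2)$, $\alpha=(\frac{b+\sqrt d}{2c},\frac{b-\sqrt d}{2c})$ if $L=F\oplus F$. Then: (i) $\{1,\xi_0\}$ is a basis of the free $\mathfrak{o}$-module $\mathfrak{o}_L$, and so is $\{1,\alpha\}$; (ii) there is no $x\in\mathfrak{o}$ with $\alpha+x\in\mathfrak{P}$.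
   Context: $L=F(\sqrt d)$ if $d\notin F^{\times2}$, and $L=F\oplus F$ (with $F$ embedded diagonally) if $d\in F^{\times2}$. $\mathfrak{o}_L$ is the ring of integers of $L$ if $L$ is a field, and $\mathfrak{o}\oplus\mathfrak{o}$ otherwise. $\mathfrak{P}=\mathfrak{p}\mathfrak{o}_L$. *)

theory Defs
  imports Main "HOL-Library.Product_Plus"
begin

text \<open>A normalized discrete valuation on a field; the value at 0 is irrelevant
  (conventionally +infinity) and is never used.\<close>
definition discrete_valuation :: "('a::field \<Rightarrow> int) \<Rightarrow> bool" where
  "discrete_valuation v \<longleftrightarrow>
     (\<forall>x y. x \<noteq> 0 \<and> y \<noteq> 0 \<longrightarrow> v (x * y) = v x + v y) \<and>
     (\<forall>x y. x \<noteq> 0 \<and> y \<noteq> 0 \<and> x + y \<noteq> 0 \<longrightarrow> min (v x) (v y) \<le> v (x + y)) \<and>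
     (\<exists>\<pi>. \<pi> \<noteq> 0 \<and> v \<pi> = 1)"

definition val_ring :: "('a::field \<Rightarrow> int) \<Rightarrow> 'a set" where
  "val_ring v = {x. x = 0 \<or> 0 \<le> v x}"

definition max_ideal :: "('a::field \<Rightarrow> int) \<Rightarrow> 'a set" where
  "max_ideal v = {x. x = 0 \<or> 1 \<le> v x}"

definition val_units :: "('a::field \<Rightarrow> int) \<Rightarrow> 'a set" where
  "val_units v = {x. x \<noteq> 0 \<and> v x = 0}"

definition val_complete :: "('a::field \<Rightarrow> int) \<Rightarrow> bool" where
  "val_complete v \<longleftrightarrow>
     (\<forall>X :: nat \<Rightarrow> 'a.
        (\<forall>N::int. \<exists>M. \<forall>m\<ge>M. \<forall>n\<ge>M. X m - X n = 0 \<or> N \<le> v (X m - X n)) \<longrightarrow>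
        (\<exists>l. \<forall>N::int. \<exists>M. \<forall>n\<ge>M. X n - l = 0 \<or> N \<le> v (X n - l)))"

definition finite_residue_field :: "('a::field \<Rightarrow> int) \<Rightarrow> bool" where
  "finite_residue_field v \<longleftrightarrow>
     (\<exists>R. finite R \<and> R \<subseteq> val_ring v \<and>
          (\<forall>x\<in>val_ring v. \<exists>r\<in>R. x - r \<in> max_ideal v))"

text \<open>F (of characteristic zero via the type class field_char_0) is a non-archimedean
  local field with normalized valuation v: complete w.r.t. a discrete valuation with
  finite residue field.\<close>
definition nonarch_local_field :: "('a::field \<Rightarrow> int) \<Rightarrow> bool" where
  "nonarch_local_field v \<longleftrightarrow>
     discrete_valuation v \<and> val_complete v \<and> finite_residue_field v"

definition is_square_nz :: "'a::field \<Rightarrow> bool" where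
  "is_square_nz d \<longleftrightarrow> (\<exists>s. s \<noteq> 0 \<and> s ^ 2 = d)"

text \<open>Scalar multiplication by F (F embedded as (r,0) in F(sqrt d), diagonally in F+F;
  in both models it acts componentwise).\<close>
definition smul :: "'a::field \<Rightarrow> 'a \<times> 'a \<Rightarrow> 'a \<times> 'a" where
  "smul r z = (r * fst z, r * snd z)"

text \<open>Field case: L = F(sqrt d) = F[X]/(X^2 - d), the pair (u,w) standing for u + w sqrt d.\<close>
definition qmul :: "'a::field \<Rightarrow> 'a \<times> 'a \<Rightarrow> 'a \<times> 'a \<Rightarrow> 'a \<times> 'a" where
  "qmul d x y = (fst x * fst y + d * snd x * snd y, fst x * snd y + snd x * fst y)"

definition qpow :: "'a::field \<Rightarrow> 'a \<times> 'a \<Rightarrow> nat \<Rightarrow> 'a \<times> 'a" where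
  "qpow d z n = ((qmul d z) ^^ n) (1, 0)"

definition qtrace :: "'a::field \<times> 'a \<Rightarrow> 'a" where
  "qtrace z = 2 * fst z"

definition int_ring_field :: "('a::field \<Rightarrow> int) \<Rightarrow> 'a \<Rightarrow> ('a \<times> 'a) set" where
  "int_ring_field v d = {z. \<exists>n cs. 0 < n \<and> (\<forall>i<n. cs i \<in> val_ring v) \<and>
       qpow d z n + (\<Sum>i<n. smul (cs i) (qpow d z i)) = 0}"

definition qdisc :: "'a::field \<Rightarrow> 'a \<times> 'a \<Rightarrow> 'a \<times> 'a \<Rightarrow> 'a" where
  "qdisc d x y = qtrace (qmul d x x) * qtrace (qmul d y y) - qtrace (qmul d x y) * qtrace (qmul d y x)"

inductive_set o_ideal :: "('a::field \<Rightarrow> int) \<Rightarrow> 'a set \<Rightarrow> 'a set"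
  for v :: "'a \<Rightarrow> int" and S :: "'a set" where
  zero: "0 \<in> o_ideal v S"
| step: "r \<in> val_ring v \<Longrightarrow> s \<in> S \<Longrightarrow> y \<in> o_ideal v S \<Longrightarrow> r * s + y \<in> o_ideal v S"

definition disc_ideal_field :: "('a::field \<Rightarrow> int) \<Rightarrow> 'a \<Rightarrow> 'a set" where
  "disc_ideal_field v d =
     o_ideal v {qdisc d x y | x y. x \<in> int_ring_field v d \<and> y \<in> int_ring_field v d}"

definition int_ring_split :: "('a::field \<Rightarrow> int) \<Rightarrow> ('a \<times> 'a) set" where
  "int_ring_split v = val_ring v \<times> val_ring v"

text \<open>The ideal P = p o_L (o_L-module generated by p; in both models the action of p is
  via the scalar action).\<close>
inductive_set ext_ideal :: "('a::field \<Rightarrow> int) \<Rightarrow> ('a \<times> 'a) set \<Rightarrow> ('a \<times> 'a) set"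
  for v :: "'a \<Rightarrow> int" and OL :: "('a \<times> 'a) set" where
  zero: "0 \<in> ext_ideal v OL"
| step: "p \<in> max_ideal v \<Longrightarrow> z \<in> OL \<Longrightarrow> y \<in> ext_ideal v OL \<Longrightarrow> smul p z + y \<in> ext_ideal v OL"

definition is_o_basis :: "('a::field \<Rightarrow> int) \<Rightarrow> ('a \<times> 'a) set \<Rightarrow> 'a \<times> 'a \<Rightarrow> 'a \<times> 'a \<Rightarrow> bool" where
  "is_o_basis v OL e1 e2 \<longleftrightarrow> e1 \<in> OL \<and> e2 \<in> OL \<and>
     (\<forall>z\<in>OL. \<exists>!uw. fst uw \<in> val_ring v \<and> snd uw \<in> val_ring v \<and>
                   z = smul (fst uw) e1 + smul (snd uw) e2)"

end

theory Submission
  imports Defs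
begin


context
  fixes v :: "'a::field_char_0 \<Rightarrow> int"
  assumes dv: "discrete_valuation v"
begin

lemma vmult: "x \<noteq> 0 \<Longrightarrow> y \<noteq> 0 \<Longrightarrow> v (x*y) = v x + v y"
  using dv unfolding discrete_valuation_def by blast

lemma vadd: "x \<noteq> 0 \<Longrightarrow> y \<noteq> 0 \<Longrightarrow> x + y \<noteq> 0 \<Longrightarrow> min (v x) (v y) \<le> v (x+y)"
  using dv unfolding discrete_valuation_def by blast

lemma v1: "v 1 = 0"
  using vmult[of 1 1] by simp

lemma vneg: "x \<noteq> 0 \<Longrightarrow> v (-x) = v x"
proof -
  have "v 1 = v (-1) + v (-1)" using vmult[of "-1" "-1"] by simp
  hence m: "v (-1) = 0" using v1 by simp
  assume "x \<noteq> 0" thus ?thesis using vmult[of "-1" x] m by simp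
qed

lemma vinv: "x \<noteq> 0 \<Longrightarrow> v (inverse x) = - v x"
  using vmult[of x "inverse x"] v1 by simp

lemma or_add: "x \<in> val_ring v \<Longrightarrow> y \<in> val_ring v \<Longrightarrow> x + y \<in> val_ring v"
  unfolding val_ring_def using vadd[of x y] by (cases "x = 0"; cases "y = 0"; cases "x+y=0") auto

lemma or_mult: "x \<in> val_ring v \<Longrightarrow> y \<in> val_ring v \<Longrightarrow> x * y \<in> val_ring v"
  unfolding val_ring_def using vmult[of x y] by (cases "x = 0"; cases "y = 0") auto

lemma or_neg: "x \<in> val_ring v \<Longrightarrow> - x \<in> val_ring v"
  unfolding val_ring_def using vneg[of x] by (cases "x = 0") auto

lemma or_diff: "x \<in> val_ring v \<Longrightarrow> y \<in> val_ring v \<Longrightarrow> x - y \<in> val_ring v"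
  using or_add[of x "-y"] or_neg[of y] by simp

lemma or_1: "1 \<in> val_ring v" unfolding val_ring_def using v1 by simp
lemma or_0: "0 \<in> val_ring v" unfolding val_ring_def by simp
lemma or_2: "2 \<in> val_ring v" using or_add[OF or_1 or_1] by simp
lemma or_4: "4 \<in> val_ring v" using or_mult[OF or_2 or_2] by simp

lemma mi_add: "x \<in> max_ideal v \<Longrightarrow> y \<in> max_ideal v \<Longrightarrow> x + y \<in> max_ideal v"
  unfolding max_ideal_def using vadd[of x y] by (cases "x = 0"; cases "y = 0"; cases "x+y=0") auto

lemma mi_mult: "x \<in> val_ring v \<Longrightarrow> y \<in> max_ideal v \<Longrightarrow> x * y \<in> max_ideal v"
  unfolding val_ring_def max_ideal_def using vmult[of x y] by (cases "x = 0"; cases "y = 0") auto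

lemma mi_neg: "x \<in> max_ideal v \<Longrightarrow> - x \<in> max_ideal v"
  unfolding max_ideal_def using vneg[of x] by (cases "x = 0") auto

lemma mi_diff: "x \<in> max_ideal v \<Longrightarrow> y \<in> max_ideal v \<Longrightarrow> x - y \<in> max_ideal v"
  using mi_add[of x "-y"] mi_neg[of y] by simp

lemma unit_not_mi: "x \<in> val_units v \<Longrightarrow> x \<notin> max_ideal v"
  unfolding val_units_def max_ideal_def by auto

lemma unit_or: "x \<in> val_units v \<Longrightarrow> x \<in> val_ring v"
  unfolding val_units_def val_ring_def by auto

lemma unit_inv: "x \<in> val_units v \<Longrightarrow> inverse x \<in> val_units v"
  unfolding val_units_def using vinv by auto

lemma unit_mult: "x \<in> val_units v \<Longrightarrow> y \<in> val_units v \<Longrightarrow> x * y \<in> val_units v"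
  unfolding val_units_def using vmult by auto

lemma unit_nz: "x \<in> val_units v \<Longrightarrow> x \<noteq> 0"
  unfolding val_units_def by auto

lemma sq_or: assumes "t^2 \<in> val_ring v" shows "t \<in> val_ring v"
proof (cases "t = 0")
  case False
  hence "v (t^2) = 2 * v t" using vmult[of t t] by (simp add: power2_eq_square)
  thus ?thesis using assms False unfolding val_ring_def by auto
qed (simp add: val_ring_def)

lemma sq_unit: assumes "t^2 \<in> val_units v" shows "t \<in> val_units v"
proof -
  have "t \<noteq> 0" using assms unfolding val_units_def by auto
  hence "v (t^2) = 2 * v t" using vmult[of t t] by (simp add: power2_eq_square)
  thus ?thesis using assms \<open>t \<noteq> 0\<close> unfolding val_units_def by auto
qed

lemma sum_prod_or:
  assumes "x + y \<in> val_ring v" "x * y \<in> val_ring v" shows "x \<in> val_ring v"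
proof (rule ccontr)
  assume nx: "x \<notin> val_ring v"
  hence x0: "x \<noteq> 0" and vx: "v x < 0" unfolding val_ring_def by auto
  show False
  proof (cases "y = 0")
    case True thus False using assms nx by simp
  next
    case False
    have "v (x*y) = v x + v y" using vmult x0 False by blast
    moreover have "0 \<le> v (x*y)" using assms(2) x0 False unfolding val_ring_def by simp
    ultimately have vy: "v y > 0" using vx by simp
    have "x + y \<noteq> 0"
    proof
      assume "x + y = 0"
      hence "y = - x" by (simp add: add_eq_0_iff)
      hence "v y = v x" using vneg[OF x0] by simp
      thus False using vy vx by simp
    qed
    hence "0 \<le> v (x+y)" using assms(1) unfolding val_ring_def by simp
    have "x = (x + y) + (- y)" by simp
    hence "min (v (x+y)) (v (-y)) \<le> v x" using vadd[of "x+y" "-y"] \<open>x+y\<noteq>0\<close> False x0 by simp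
    thus False using \<open>0 \<le> v (x+y)\<close> vneg[OF False] vy vx by simp
  qed
qed

lemma o_ideal_sub: "z \<in> o_ideal v {d} \<Longrightarrow> \<exists>r\<in>val_ring v. z = r * d"
proof (induction rule: o_ideal.induct)
  case zero thus ?case using or_0 by auto
next
  case (step r s y)
  then obtain r' where "r' \<in> val_ring v" "y = r' * d" by auto
  thus ?case using step or_add[of r r'] by (intro bexI[of _ "r+r'"]) (auto simp: distrib_right)
qed

lemma in_o_ideal: "s \<in> S \<Longrightarrow> s \<in> o_ideal v S"
  using o_ideal.step[OF or_1 _ o_ideal.zero, of s S] by simp

end

lemma basisI:
  assumes "e1 \<in> OL" "e2 \<in> OL"
    and "\<And>z. z\<in>OL \<Longrightarrow> f z \<in> val_ring v \<and> g z \<in> val_ring v \<and> z = smul (f z) e1 + smul (g z) e2"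
    and "\<And>z x y. z = smul x e1 + smul y e2 \<Longrightarrow> x = f z \<and> y = g z"
  shows "is_o_basis v OL e1 e2"
  unfolding is_o_basis_def
proof (intro conjI ballI assms(1,2))
  fix z assume z: "z \<in> OL"
  show "\<exists>!uw. fst uw \<in> val_ring v \<and> snd uw \<in> val_ring v \<and> z = smul (fst uw) e1 + smul (snd uw) e2"
  proof (rule ex1I[of _ "(f z, g z)"])
    show "fst (f z, g z) \<in> val_ring v \<and> snd (f z, g z) \<in> val_ring v \<and> z = smul (fst (f z, g z)) e1 + smul (snd (f z, g z)) e2"
      using assms(3)[OF z] by simp
  next
    fix uw assume "fst uw \<in> val_ring v \<and> snd uw \<in> val_ring v \<and> z = smul (fst uw) e1 + smul (snd uw) e2"
    hence "fst uw = f z \<and> snd uw = g z" using assms(4) by blast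
    thus "uw = (f z, g z)" by (simp add: prod_eq_iff)
  qed
qed

lemma qmul_simps: "qmul d x y = (fst x * fst y + d * snd x * snd y, fst x * snd y + snd x * fst y)"
  by (simp add: qmul_def)

lemma qdisc_formula: "qdisc d x y = 4 * d * (fst x * snd y - snd x * fst y)^2"
  by (simp add: qdisc_def qtrace_def qmul_def power2_eq_square algebra_simps)

lemma intI2:
  assumes "c0 \<in> val_ring v" "c1 \<in> val_ring v"
    and "qmul d z z + smul c1 z + smul c0 (1,0) = 0"
  shows "z \<in> int_ring_field v d"
  unfolding int_ring_field_def
proof (intro CollectI exI conjI)
  let ?cs = "\<lambda>i::nat. if i = 0 then c0 else c1"
  show "(0::nat) < 2" by simp
  show "\<forall>i<2. ?cs i \<in> val_ring v" using assms by auto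
  have q1: "qmul d z (1,0) = z" by (simp add: qmul_def)
  show "qpow d z 2 + (\<Sum>i<2. smul (?cs i) (qpow d z i)) = 0"
    using assms(3) by (simp add: qpow_def numeral_2_eq_2 q1 add_ac)
qed

lemma int1: fixes v :: "'a::field_char_0 \<Rightarrow> int" assumes "discrete_valuation v" shows "(1,0) \<in> int_ring_field v d"
  unfolding int_ring_field_def
proof (intro CollectI exI conjI)
  show "(0::nat) < 1" by simp
  show "\<forall>i<1. (\<lambda>_. -1) i \<in> val_ring v" using or_neg[OF assms or_1[OF assms]] by auto
  show "qpow d (1,0) 1 + (\<Sum>i<1. smul ((\<lambda>_. -1) i) (qpow d (1,0) i)) = 0"
    by (simp add: qpow_def qmul_def smul_def zero_prod_def)
qed

lemma split_basis:
  fixes v :: "'a::field_char_0 \<Rightarrow> int"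
  assumes dv: "discrete_valuation v" and p: "p1 \<in> val_ring v" "p2 \<in> val_ring v"
    and u: "p1 - p2 \<in> val_units v"
  shows "is_o_basis v (val_ring v \<times> val_ring v) (1,1) (p1,p2)"
proof -
  have d0: "p1 - p2 \<noteq> 0" using unit_nz[OF dv u] .
  have ui: "inverse (p1 - p2) \<in> val_ring v" using unit_or[OF dv unit_inv[OF dv u]] .
  show ?thesis
  proof (rule basisI[where f="\<lambda>z. fst z - (fst z - snd z) * inverse (p1-p2) * p1"
        and g="\<lambda>z. (fst z - snd z) * inverse (p1-p2)"])
    show "(1,1) \<in> val_ring v \<times> val_ring v" using or_1[OF dv] by simp
    show "(p1,p2) \<in> val_ring v \<times> val_ring v" using p by simp
  next
    fix z :: "'a \<times> 'a" assume z: "z \<in> val_ring v \<times> val_ring v"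
    then obtain z1 z2 where zz: "z = (z1,z2)" "z1 \<in> val_ring v" "z2 \<in> val_ring v" by auto
    have g: "(z1 - z2) * inverse (p1-p2) \<in> val_ring v" using or_mult[OF dv or_diff[OF dv zz(2,3)] ui] .
    have f: "z1 - (z1 - z2) * inverse (p1-p2) * p1 \<in> val_ring v"
      using or_diff[OF dv zz(2) or_mult[OF dv g p(1)]] .
    have eq: "(z1,z2) = smul (z1 - (z1 - z2) * inverse (p1-p2) * p1) (1,1) + smul ((z1 - z2) * inverse (p1-p2)) (p1,p2)"
    proof -
      define G where "G = (z1 - z2) * inverse (p1-p2)"
      have gd: "G * (p1 - p2) = z1 - z2" using d0 unfolding G_def by simp
      have "z2 = z1 - G * p1 + G * p2" using gd by algebra
      thus ?thesis unfolding smul_def G_def[symmetric] by simp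
    qed
    show "fst z - (fst z - snd z) * inverse (p1-p2) * p1 \<in> val_ring v \<and>
          (fst z - snd z) * inverse (p1-p2) \<in> val_ring v \<and>
          z = smul (fst z - (fst z - snd z) * inverse (p1-p2) * p1) (1,1) + smul ((fst z - snd z) * inverse (p1-p2)) (p1,p2)"
      using f g eq unfolding zz(1) fst_conv snd_conv by blast
  next
    fix z :: "'a \<times> 'a" and x y assume "z = smul x (1,1) + smul y (p1,p2)"
    hence "fst z = x + y * p1" "snd z = x + y * p2" by (auto simp: smul_def)
    thus "x = fst z - (fst z - snd z) * inverse (p1-p2) * p1 \<and> y = (fst z - snd z) * inverse (p1-p2)"
      using d0 by (simp add: field_simps)
  qed
qed

lemma split_ext:
  fixes v :: "'a::field_char_0 \<Rightarrow> int"
  assumes dv: "discrete_valuation v"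
  shows "y \<in> ext_ideal v (val_ring v \<times> val_ring v) \<Longrightarrow> y \<in> max_ideal v \<times> max_ideal v"
proof (induction rule: ext_ideal.induct)
  case zero thus ?case by (simp add: max_ideal_def zero_prod_def)
next
  case (step p z y)
  thus ?case using mi_add[OF dv] mi_mult[OF dv] by (auto simp: smul_def mult.commute)
qed

lemma split_ii:
  fixes v :: "'a::field_char_0 \<Rightarrow> int"
  assumes dv: "discrete_valuation v" and u: "p1 - p2 \<in> val_units v"
  shows "\<not> (\<exists>x\<in>val_ring v. (p1,p2) + smul x (1,1) \<in> ext_ideal v (val_ring v \<times> val_ring v))"
proof
  assume "\<exists>x\<in>val_ring v. (p1,p2) + smul x (1,1) \<in> ext_ideal v (val_ring v \<times> val_ring v)"
  then obtain x where "(p1,p2) + smul x (1,1) \<in> ext_ideal v (val_ring v \<times> val_ring v)" by blast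
  hence "(p1 + x, p2 + x) \<in> ext_ideal v (val_ring v \<times> val_ring v)" by (simp add: smul_def)
  hence "(p1 + x, p2 + x) \<in> max_ideal v \<times> max_ideal v" using split_ext[OF dv] by blast
  hence "p1 + x \<in> max_ideal v" "p2 + x \<in> max_ideal v" by auto
  hence "(p1 + x) - (p2 + x) \<in> max_ideal v" using mi_diff[OF dv] by blast
  thus False using unit_not_mi[OF dv] u by simp
qed


lemma sqhelp: fixes b u w d r2 :: "'a::field_char_0" assumes "4 * d * ((- b / 2) * w - (1/2) * u)^2 = r2 * d" "d \<noteq> 0"
 shows "(u + b * w)^2 = r2"
proof -
  have e: "(- b / 2) * w - (1/2) * u = - (u + b * w) / 2" by (simp add: field_simps)
  have "4 * ((- b / 2) * w - (1/2) * u)^2 = r2" using assms by (simp add: mult.commute)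
  moreover have "4 * (- (u + b * w) / 2)^2 = (u + b * w)^2" by (simp add: power2_eq_square field_simps)
  ultimately show ?thesis unfolding e by simp
qed

theorem mainTheorem7:
  fixes v :: "'a::field_char_0 \<Rightarrow> int" and a b c d :: 'a
  assumes F: "nonarch_local_field v"
    and d_def: "d = b ^ 2 - 4 * a * c" and d_nz: "d \<noteq> 0"
    and A1: "a \<in> val_ring v" "b \<in> val_ring v" "c \<in> val_units v"
    and A2_field: "\<not> is_square_nz d \<longrightarrow> o_ideal v {d} = disc_ideal_field v d"
    and A2_split: "is_square_nz d \<longrightarrow> d \<in> val_units v"
  shows
    "(\<not> is_square_nz d \<longrightarrow>
       (let OL = int_ring_field v d; one = (1, 0);
            xi0 = (- b / 2, 1 / 2); \<alpha> = (b / (2 * c), 1 / (2 * c))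
        in is_o_basis v OL one xi0 \<and> is_o_basis v OL one \<alpha> \<and>
           \<not> (\<exists>x\<in>val_ring v. \<alpha> + smul x one \<in> ext_ideal v OL)))
     \<and>
     (\<forall>s. s ^ 2 = d \<longrightarrow>
       (let OL = int_ring_split v; one = (1, 1);
            xi0 = ((- b + s) / 2, (- b - s) / 2);
            \<alpha> = ((b + s) / (2 * c), (b - s) / (2 * c))
        in is_o_basis v OL one xi0 \<and> is_o_basis v OL one \<alpha> \<and>
           \<not> (\<exists>x\<in>val_ring v. \<alpha> + smul x one \<in> ext_ideal v OL)))"
proof (intro conjI impI allI)
  have dv: "discrete_valuation v" using F unfolding nonarch_local_field_def by blast
  have c0: "c \<noteq> 0" using unit_nz[OF dv A1(3)] .
  have icu: "inverse c \<in> val_units v" using unit_inv[OF dv A1(3)] .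
  have ic: "inverse c \<in> val_ring v" using unit_or[OF dv icu] .
  {
    assume nsq: "\<not> is_square_nz d"
    define OL where "OL = int_ring_field v d"
    have one: "(1,0) \<in> OL" unfolding OL_def using int1[OF dv] .
    have xi: "(- b / 2, 1 / 2) \<in> OL" unfolding OL_def
    proof (rule intI2[of "a*c" v b])
      show "a * c \<in> val_ring v" using or_mult[OF dv A1(1) unit_or[OF dv A1(3)]] .
      show "b \<in> val_ring v" using A1(2) .
      show "qmul d (- b / 2, 1 / 2) (- b / 2, 1 / 2) + smul b (- b / 2, 1 / 2) + smul (a * c) (1, 0) = 0"
        by (simp add: qmul_def smul_def zero_prod_def d_def field_simps power2_eq_square)
    qed
    have al: "(b / (2 * c), 1 / (2 * c)) \<in> OL" unfolding OL_def
    proof (rule intI2[of "a * inverse c" v "- (b * inverse c)"])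
      show "a * inverse c \<in> val_ring v" using or_mult[OF dv A1(1) ic] .
      show "- (b * inverse c) \<in> val_ring v" using or_neg[OF dv or_mult[OF dv A1(2) ic]] .
      show "qmul d (b / (2 * c), 1 / (2 * c)) (b / (2 * c), 1 / (2 * c)) + smul (- (b * inverse c)) (b / (2 * c), 1 / (2 * c)) + smul (a * inverse c) (1, 0) = 0"
        using c0 by (simp add: qmul_def smul_def zero_prod_def d_def field_simps power2_eq_square)
    qed
    have coords: "2 * snd z \<in> val_ring v \<and> fst z + b * snd z \<in> val_ring v" if z: "z \<in> OL" for z
    proof -
      have dI: "qdisc d x z \<in> o_ideal v {d}" if x: "x \<in> OL" for x
      proof -
        have "qdisc d x z \<in> disc_ideal_field v d" unfolding disc_ideal_field_def
          by (rule in_o_ideal[OF dv]) (use x z OL_def in blast)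
        thus ?thesis using A2_field nsq by simp
      qed
      obtain r1 where r1: "r1 \<in> val_ring v" "qdisc d (1,0) z = r1 * d"
        using o_ideal_sub[OF dv dI[OF one]] by blast
      have "(2 * snd z)^2 = r1" using r1(2) d_nz unfolding qdisc_formula by (simp add: power2_eq_square)
      hence A: "2 * snd z \<in> val_ring v" using sq_or[OF dv] r1(1) by blast
      obtain r2 where r2: "r2 \<in> val_ring v" "qdisc d (- b / 2, 1 / 2) z = r2 * d"
        using o_ideal_sub[OF dv dI[OF xi]] by blast
      have "(fst z + b * snd z)^2 = r2" using r2(2) d_nz unfolding qdisc_formula fst_conv snd_conv
        by (rule sqhelp)
      hence B: "fst z + b * snd z \<in> val_ring v" using sq_or[OF dv] r2(1) by blast
      show ?thesis using A B by blast
    qed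
    have b1: "is_o_basis v OL (1,0) (- b / 2, 1 / 2)"
    proof (rule basisI[where f="\<lambda>z. fst z + b * snd z" and g="\<lambda>z. 2 * snd z"])
      fix z assume z: "z \<in> OL"
      show "fst z + b * snd z \<in> val_ring v \<and> 2 * snd z \<in> val_ring v \<and>
            z = smul (fst z + b * snd z) (1, 0) + smul (2 * snd z) (- b / 2, 1 / 2)"
        using coords[OF z] by (simp add: smul_def prod_eq_iff)
    next
      fix z x y assume "z = smul x (1, 0) + smul y (- b / 2, 1 / 2)"
      hence h: "fst z = x - y * b / 2" "snd z = y / 2" by (auto simp: smul_def)
      have e: "fst z + b * snd z = (x - y * b / 2) + b * (y / 2)" unfolding h by (rule refl)
      have "(x - y * b / 2) + b * (y / 2) = x" by simp
      hence "x = fst z + b * snd z" using e by simp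
      moreover have "y = 2 * snd z" unfolding h by simp
      ultimately show "x = fst z + b * snd z \<and> y = 2 * snd z" by blast
    qed (use one xi in auto)
    have b2: "is_o_basis v OL (1,0) (b / (2 * c), 1 / (2 * c))"
    proof (rule basisI[where f="\<lambda>z. fst z - b * snd z" and g="\<lambda>z. c * (2 * snd z)"])
      fix z assume z: "z \<in> OL"
      have f: "fst z - b * snd z \<in> val_ring v"
      proof -
        have e: "fst z - b * snd z = (fst z + b * snd z) - b * (2 * snd z)" by (simp add: algebra_simps)
        show ?thesis unfolding e
          by (rule or_diff[OF dv conjunct2[OF coords[OF z]] or_mult[OF dv A1(2) conjunct1[OF coords[OF z]]]])
      qed
      have g: "c * (2 * snd z) \<in> val_ring v" using or_mult[OF dv unit_or[OF dv A1(3)]] coords[OF z] by blast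
      show "fst z - b * snd z \<in> val_ring v \<and> c * (2 * snd z) \<in> val_ring v \<and>
            z = smul (fst z - b * snd z) (1, 0) + smul (c * (2 * snd z)) (b / (2 * c), 1 / (2 * c))"
        using f g c0 by (simp add: smul_def prod_eq_iff field_simps)
    next
      fix z x y assume "z = smul x (1, 0) + smul y (b / (2 * c), 1 / (2 * c))"
      hence h: "fst z = x + y * b / (2 * c)" "snd z = y / (2 * c)" by (auto simp: smul_def)
      have e: "fst z - b * snd z = (x + y * b / (2 * c)) - b * (y / (2 * c))" unfolding h by (rule refl)
      have "(x + y * b / (2 * c)) - b * (y / (2 * c)) = x" by simp
      hence "x = fst z - b * snd z" using e by simp
      moreover have "y = c * (2 * snd z)" unfolding h using c0 by simp
      ultimately show "x = fst z - b * snd z \<and> y = c * (2 * snd z)" by blast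
    qed (use one al in auto)
    have ext: "2 * snd y \<in> max_ideal v \<and> fst y + b * snd y \<in> max_ideal v" if "y \<in> ext_ideal v OL" for y
      using that
    proof (induction rule: ext_ideal.induct)
      case zero thus ?case by (simp add: max_ideal_def)
    next
      case (step p z y)
      have e1: "2 * snd (smul p z + y) = (2 * snd z) * p + 2 * snd y" by (simp add: smul_def algebra_simps)
      have e2: "fst (smul p z + y) + b * snd (smul p z + y) = (fst z + b * snd z) * p + (fst y + b * snd y)"
        by (simp add: smul_def algebra_simps)
      show ?case unfolding e1 e2 using step coords[OF step(2)] mi_add[OF dv] mi_mult[OF dv] by blast
    qed
    have ii: "\<not> (\<exists>x\<in>val_ring v. (b / (2 * c), 1 / (2 * c)) + smul x (1,0) \<in> ext_ideal v OL)"
    proof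
      assume "\<exists>x\<in>val_ring v. (b / (2 * c), 1 / (2 * c)) + smul x (1,0) \<in> ext_ideal v OL"
      then obtain x where "(b / (2 * c), 1 / (2 * c)) + smul x (1,0) \<in> ext_ideal v OL" by blast
      hence "2 * snd ((b / (2 * c), 1 / (2 * c)) + smul x (1,0)) \<in> max_ideal v" using ext by blast
      hence "inverse c \<in> max_ideal v" by (simp add: smul_def inverse_eq_divide)
      thus False using unit_not_mi[OF dv icu] by simp
    qed
    show "let OL = int_ring_field v d; one = (1, 0);
            xi0 = (- b / 2, 1 / 2); \<alpha> = (b / (2 * c), 1 / (2 * c))
        in is_o_basis v OL one xi0 \<and> is_o_basis v OL one \<alpha> \<and>
           \<not> (\<exists>x\<in>val_ring v. \<alpha> + smul x one \<in> ext_ideal v OL)"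
      unfolding Let_def OL_def[symmetric] using b1 b2 ii by blast
  }
  {
    fix s assume s: "s ^ 2 = d"
    have sq: "is_square_nz d" unfolding is_square_nz_def using s d_nz by (intro exI[of _ s]) auto
    hence du: "d \<in> val_units v" using A2_split by blast
    have su: "s \<in> val_units v" using sq_unit[OF dv] du s by simp
    have s2: "s * s = b * b - 4 * a * c" using s d_def by (simp add: power2_eq_square)
    have ac: "a * c \<in> val_ring v" using or_mult[OF dv A1(1) unit_or[OF dv A1(3)]] .
    have sum1: "(- b + s) / 2 + (- b - s) / 2 = - b" by (simp add: field_simps)
    have prod1: "(- b + s) / 2 * ((- b - s) / 2) = a * c"
    proof -
      have "(- b + s) * (- b - s) = 4 * (a * c)" using s2 by algebra
      moreover have "(- b + s) / 2 * ((- b - s) / 2) = ((- b + s) * (- b - s)) / 4" by simp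
      ultimately show ?thesis by simp
    qed
    have x1: "(- b + s) / 2 \<in> val_ring v"
    proof (rule sum_prod_or[OF dv, of _ "(- b - s) / 2"])
      show "(- b + s) / 2 + (- b - s) / 2 \<in> val_ring v" unfolding sum1 by (rule or_neg[OF dv A1(2)])
      show "(- b + s) / 2 * ((- b - s) / 2) \<in> val_ring v" unfolding prod1 by (rule ac)
    qed
    have x2: "(- b - s) / 2 \<in> val_ring v"
    proof (rule sum_prod_or[OF dv, of _ "(- b + s) / 2"])
      show "(- b - s) / 2 + (- b + s) / 2 \<in> val_ring v" unfolding add.commute[of "(- b - s) / 2"] sum1 by (rule or_neg[OF dv A1(2)])
      show "(- b - s) / 2 * ((- b + s) / 2) \<in> val_ring v" unfolding mult.commute[of "(- b - s) / 2"] prod1 by (rule ac)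
    qed
    have dif1: "(- b + s) / 2 - (- b - s) / 2 = s" by (simp add: field_simps)
    have sum2: "(b + s) / (2 * c) + (b - s) / (2 * c) = b * inverse c" using c0 by (simp add: field_simps)
    have prod2: "(b + s) / (2 * c) * ((b - s) / (2 * c)) = a * inverse c"
    proof -
      have h: "(b + s) * (b - s) = (c * 4) * a" using s2 by algebra
      have "(b + s) / (2 * c) * ((b - s) / (2 * c)) = ((b + s) * (b - s)) / ((2 * c) * (2 * c))"
        by (rule times_divide_times_eq)
      also have "\<dots> = (c * 4) * a / ((c * 4) * c)" unfolding h by (simp add: ac_simps)
      also have "\<dots> = a / c" using c0 by (metis mult_divide_mult_cancel_left_if mult_eq_0_iff zero_neq_numeral)
      finally have "(b + s) / (2 * c) * ((b - s) / (2 * c)) = a / c" .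
      thus ?thesis by (simp only: divide_inverse[of a c])
    qed
    have bi: "b * inverse c \<in> val_ring v" using or_mult[OF dv A1(2) ic] .
    have ai: "a * inverse c \<in> val_ring v" using or_mult[OF dv A1(1) ic] .
    have y1: "(b + s) / (2 * c) \<in> val_ring v"
    proof (rule sum_prod_or[OF dv, of _ "(b - s) / (2 * c)"])
      show "(b + s) / (2 * c) + (b - s) / (2 * c) \<in> val_ring v" unfolding sum2 by (rule bi)
      show "(b + s) / (2 * c) * ((b - s) / (2 * c)) \<in> val_ring v" unfolding prod2 by (rule ai)
    qed
    have y2: "(b - s) / (2 * c) \<in> val_ring v"
    proof (rule sum_prod_or[OF dv, of _ "(b + s) / (2 * c)"])
      show "(b - s) / (2 * c) + (b + s) / (2 * c) \<in> val_ring v" unfolding add.commute[of "(b - s) / (2 * c)"] sum2 by (rule bi)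
      show "(b - s) / (2 * c) * ((b + s) / (2 * c)) \<in> val_ring v" unfolding mult.commute[of "(b - s) / (2 * c)"] prod2 by (rule ai)
    qed
    have dif2: "(b + s) / (2 * c) - (b - s) / (2 * c) = s * inverse c" using c0 by (simp add: field_simps)
    have u1: "(- b + s) / 2 - (- b - s) / 2 \<in> val_units v" unfolding dif1 using su .
    have u2: "(b + s) / (2 * c) - (b - s) / (2 * c) \<in> val_units v" unfolding dif2 using unit_mult[OF dv su icu] .
    show "let OL = int_ring_split v; one = (1, 1);
            xi0 = ((- b + s) / 2, (- b - s) / 2);
            \<alpha> = ((b + s) / (2 * c), (b - s) / (2 * c))
        in is_o_basis v OL one xi0 \<and> is_o_basis v OL one \<alpha> \<and>
           \<not> (\<exists>x\<in>val_ring v. \<alpha> + smul x one \<in> ext_ideal v OL)"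
      unfolding Let_def int_ring_split_def
      using split_basis[OF dv x1 x2 u1] split_basis[OF dv y1 y2 u2] split_ii[OF dv u2] by blast
  }
qed

end
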